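(* Let $M_\infty:=\frac{U}{1-\alpha}+\frac{\alpha}{1-\alpha}\frac{B}{\xi}+K_1$, where $\alpha=1-e^{-\lambda\xi T}$ and $U,B>0$ are constants such that for every measurable $f:\mathbb{R}\times[0,T]\to[0,\infty)$ with $|f(z,t)-f(\tilde z,t)|\le|z-\tilde z|$ for all $z,\tilde z,t$, one has $\sup_{t\in[0,T]}Jf(0,t)\le U+\alpha\big(\sup_{t\in[0,T]}f(0,t)+B/\xi\big)$. Then for every $n\ge 0$, $$v_n(z,t)\le M_\infty+|z|=:L(z),\qquad (z,t)\in\mathbb{R}\times[0,T].$$
   Context: Fix constants $r>0$, $\sigma>0$, $\lambda>0$, $T>0$, $K_1\ge 0$ and $\zeta\in\{-1,1\}$. Let $\nu$ be a probability measure on $(0,\infty)$ with $\xi:=\int_{(0,\infty)}y\,\nu(dy)<\infty$, and set $\mu:=\lambda(\xi-1)$. For $t\in[0,T]$ let $q_t:=\frac{1}{rT}(1-e^{-r(T-t)})$. On a probability space with probability measure $\mathbb{Q}$ carrying a standard Brownian motion $W$, for $t\in[0,T]$ and $z\in\mathbb{R}$ let $Z^{t,z}=(Z^{t,z}_s)_{0\le s\le T-t}$ be the solution of $dZ^{t,z}_s=-\mu(q_{t+s}-Z^{t,z}_s)\,ds+\sigma(q_{t+s}-Z^{t,z}_s)\,dW_s$, $Z^{t,z}_0=z$. For measurable $f:\mathbb{R}\times[0,T]\to[0,\infty)$ define $$Pf(z,t):=\int_{(0,\infty)} f\Big(\frac{z}{y}+q_t\frac{y-1}{y},t\Big)\,y\,\nu(dy),$$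 $$Jf(z,t):=\mathbb{E}^{\mathbb{Q}}\Big\{e^{-\lambda\xi(T-t)}\big(\zeta(Z^{t,z}_{T-t}-K_1)\big)^++\int_0^{T-t}e^{-\lambda\xi s}\lambda\, Pf(Z^{t,z}_s,t+s)\,ds\Big\}.$$ Define $v_0(z,t):=(\zeta(z-K_1))^+$ and $v_{n+1}:=Jv_n$ for $n\ge0$. (Such constants $U,B$ exist; the paper establishes this.) *)

theory Defs
  imports "HOL-Probability.Probability"
begin

definition standard_BM :: "'a measure \<Rightarrow> (real \<Rightarrow> 'a \<Rightarrow> real) \<Rightarrow> bool" where
  "standard_BM M W \<longleftrightarrow>
     prob_space M \<and>
     (\<forall>t. W t \<in> borel_measurable M) \<and>
     (\<forall>\<omega>\<in>space M. W 0 \<omega> = 0 \<and> continuous_on {0..} (\<lambda>t. W t \<omega>)) \<and>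
     (\<forall>s t. 0 \<le> s \<and> s < t \<longrightarrow>
        distributed M lborel (\<lambda>\<omega>. W t \<omega> - W s \<omega>)
          (\<lambda>x. ennreal (normal_density 0 (sqrt (t - s)) x))) \<and>
     (\<forall>(ts::nat \<Rightarrow> real) n. 0 \<le> ts 0 \<and> (\<forall>i<n. ts i < ts (Suc i)) \<longrightarrow>
        prob_space.indep_vars M (\<lambda>_. borel) (\<lambda>i \<omega>. W (ts (Suc i)) \<omega> - W (ts i) \<omega>) {..<n})"

definition xi :: "real measure \<Rightarrow> real" where
  "xi nu = (\<integral>y. y \<partial>nu)"

definition mu :: "real \<Rightarrow> real measure \<Rightarrow> real" where
  "mu lam nu = lam * (xi nu - 1)"

definition qf :: "real \<Rightarrow> real \<Rightarrow> real \<Rightarrow> real" where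
  "qf r T t = (1 - exp (- r * (T - t))) / (r * T)"

definition alpha :: "real \<Rightarrow> real measure \<Rightarrow> real \<Rightarrow> real" where
  "alpha lam nu T = 1 - exp (- lam * xi nu * T)"

text \<open>The (unique strong) solution Z^{t,z}_s of
  dZ_s = -mu (q_{t+s} - Z_s) ds + sg (q_{t+s} - Z_s) dW_s,  Z_0 = z,
  written pathwise via the variation-of-constants formula:
  with Phi_s = exp((mu - sg^2/2) s - sg W_s) and q'(u) = - exp(-r(T-u))/T,
  Z_s = q_{t+s} - Phi_s (q_t - z + int_0^s Phi_u^{-1} q'(t+u) du).\<close>
definition Zsol :: "real \<Rightarrow> real \<Rightarrow> real \<Rightarrow> real \<Rightarrow> (real \<Rightarrow> 'a \<Rightarrow> real)
                    \<Rightarrow> real \<Rightarrow> real \<Rightarrow> real \<Rightarrow> 'a \<Rightarrow> real" where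
  "Zsol r T m sg W t z s \<omega> =
     (let Phi = (\<lambda>u. exp ((m - sg\<^sup>2 / 2) * u - sg * W u \<omega>))
      in qf r T (t + s)
         - Phi s * (qf r T t - z
                    + integral {0..s} (\<lambda>u. (- exp (- r * (T - (t + u))) / T) / Phi u)))"

definition Pop :: "real measure \<Rightarrow> real \<Rightarrow> real \<Rightarrow> (real \<Rightarrow> real \<Rightarrow> real) \<Rightarrow> real \<Rightarrow> real \<Rightarrow> ennreal" where
  "Pop nu r T f z t = (\<integral>\<^sup>+ y. ennreal (f (z / y + qf r T t * (y - 1) / y) t * y) \<partial>nu)"

definition Jop :: "'a measure \<Rightarrow> (real \<Rightarrow> 'a \<Rightarrow> real) \<Rightarrow> real measure \<Rightarrow> real \<Rightarrow> real \<Rightarrow> real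
                   \<Rightarrow> real \<Rightarrow> real \<Rightarrow> real \<Rightarrow> (real \<Rightarrow> real \<Rightarrow> real) \<Rightarrow> real \<Rightarrow> real \<Rightarrow> real" where
  "Jop M W nu r sg lam T K1 zeta f z t =
     enn2real (\<integral>\<^sup>+ \<omega>.
        ennreal (exp (- lam * xi nu * (T - t))
                 * max 0 (zeta * (Zsol r T (mu lam nu) sg W t z (T - t) \<omega> - K1)))
        + (\<integral>\<^sup>+ s\<in>{0..T - t}. ennreal (exp (- lam * xi nu * s) * lam)
              * Pop nu r T f (Zsol r T (mu lam nu) sg W t z s \<omega>) (t + s) \<partial>lborel)
      \<partial>M)"

definition vseq :: "'a measure \<Rightarrow> (real \<Rightarrow> 'a \<Rightarrow> real) \<Rightarrow> real measure \<Rightarrow> real \<Rightarrow> real \<Rightarrow> real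
                   \<Rightarrow> real \<Rightarrow> real \<Rightarrow> real \<Rightarrow> nat \<Rightarrow> real \<Rightarrow> real \<Rightarrow> real" where
  "vseq M W nu r sg lam T K1 zeta n =
     (Jop M W nu r sg lam T K1 zeta ^^ n) (\<lambda>z t. max 0 (zeta * (z - K1)))"

end

theory Submission
  imports Defs
begin
lemma nn_integral_add_le:
  assumes g: "g \<in> borel_measurable M"
  shows "(\<integral>\<^sup>+x. f x + g x \<partial>M) \<le> (\<integral>\<^sup>+x. f x \<partial>M) + (\<integral>\<^sup>+x. g x \<partial>M)"
proof -
  have "integral\<^sup>S M h \<le> (\<integral>\<^sup>+x. f x \<partial>M) + (\<integral>\<^sup>+x. g x \<partial>M)"
    if h: "simple_function M h" "h \<le> (\<lambda>x. f x + g x)" "\<forall>x. h x < top" for h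
  proof -
    have hm: "h \<in> borel_measurable M" using h(1) by (rule borel_measurable_simple_function)
    have "integral\<^sup>S M h = (\<integral>\<^sup>+x. h x \<partial>M)" using h(1) by (simp add: nn_integral_eq_simple_integral)
    also have "\<dots> \<le> (\<integral>\<^sup>+x. (h x - g x) + g x \<partial>M)"
      by (intro nn_integral_mono) (metis add.commute ennreal_minus_le_iff le_cases le_iff_add order_refl)
    also have "\<dots> = (\<integral>\<^sup>+x. (h x - g x) \<partial>M) + (\<integral>\<^sup>+x. g x \<partial>M)"
      using hm g by (intro nn_integral_add) auto
    also have "(\<integral>\<^sup>+x. (h x - g x) \<partial>M) \<le> (\<integral>\<^sup>+x. f x \<partial>M)"
    proof (intro nn_integral_mono)
      fix x have "h x \<le> f x + g x" using h(2) by (auto simp: le_fun_def)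
      then show "h x - g x \<le> f x" using h(3)[rule_format, of x] by (auto simp: ennreal_minus_le_iff add.commute)
    qed
    finally show ?thesis by (simp add: add_right_mono)
  qed
  then show ?thesis unfolding nn_integral_def_finite[of M "\<lambda>x. f x + g x"]
    by (intro SUP_least) auto
qed

lemma normal_shift_identity:
  assumes "\<sigma> > 0"
  shows "normal_density 0 \<sigma> x * exp (c * x) = exp (c\<^sup>2 * \<sigma>\<^sup>2 / 2) * normal_density (c * \<sigma>\<^sup>2) \<sigma> x"
proof -
  have "- (x - 0)\<^sup>2 / (2 * \<sigma>\<^sup>2) + c * x = c\<^sup>2 * \<sigma>\<^sup>2 / 2 + - (x - c * \<sigma>\<^sup>2)\<^sup>2 / (2 * \<sigma>\<^sup>2)"
    using assms by (simp add: field_simps power2_eq_square)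
  then have "exp (- (x - 0)\<^sup>2 / (2 * \<sigma>\<^sup>2)) * exp (c * x) = exp (c\<^sup>2 * \<sigma>\<^sup>2 / 2) * exp (- (x - c * \<sigma>\<^sup>2)\<^sup>2 / (2 * \<sigma>\<^sup>2))"
    by (metis exp_add)
  then show ?thesis unfolding normal_density_def by (simp add: algebra_simps)
qed

lemma nn_integral_normal_density: "\<sigma> > 0 \<Longrightarrow> (\<integral>\<^sup>+x. ennreal (normal_density \<mu> \<sigma> x) \<partial>lborel) = 1"
proof -
  assume "\<sigma> > 0"
  interpret prob_space "density lborel (normal_density \<mu> \<sigma>)" using prob_space_normal_density \<open>\<sigma> > 0\<close> by blast
  have "emeasure (density lborel (normal_density \<mu> \<sigma>)) UNIV = 1" using emeasure_space_1 by simp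
  then show ?thesis by (simp add: emeasure_density)
qed

lemma lognormal_mean:
  assumes D: "distributed M lborel X (\<lambda>x. ennreal (normal_density 0 \<sigma> x))" and s: "\<sigma> > 0"
  shows "(\<integral>\<^sup>+\<omega>. ennreal (exp (c * X \<omega>)) \<partial>M) = ennreal (exp (c\<^sup>2 * \<sigma>\<^sup>2 / 2))"
proof -
  have "(\<integral>\<^sup>+\<omega>. ennreal (exp (c * X \<omega>)) \<partial>M) = (\<integral>\<^sup>+x. ennreal (normal_density 0 \<sigma> x) * ennreal (exp (c * x)) \<partial>lborel)"
    by (rule distributed_nn_integral[OF D, symmetric]) simp
  also have "\<dots> = (\<integral>\<^sup>+x. ennreal (exp (c\<^sup>2 * \<sigma>\<^sup>2 / 2)) * ennreal (normal_density (c * \<sigma>\<^sup>2) \<sigma> x) \<partial>lborel)"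
    by (intro nn_integral_cong) (simp add: normal_shift_identity[OF s] ennreal_mult'[symmetric] normal_density_nonneg flip: ennreal_mult)
  also have "\<dots> = ennreal (exp (c\<^sup>2 * \<sigma>\<^sup>2 / 2))"
    by (simp add: nn_integral_cmult nn_integral_normal_density[OF s])
  finally show ?thesis .
qed

lemma ceil_approx_lim: "(\<lambda>n. real_of_int \<lceil>real (Suc n) * x\<rceil> / real (Suc n)) \<longlonglongrightarrow> (x::real)"
proof (rule tendsto_sandwich[of "\<lambda>n. x" _ _ "\<lambda>n. x + inverse (real (Suc n))"])
  show "\<forall>\<^sub>F n in sequentially. x \<le> real_of_int \<lceil>real (Suc n) * x\<rceil> / real (Suc n)"
  proof (intro always_eventually allI)
    fix n :: nat
    have "real (Suc n) * x \<le> real_of_int \<lceil>real (Suc n) * x\<rceil>" by linarith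
    then show "x \<le> real_of_int \<lceil>real (Suc n) * x\<rceil> / real (Suc n)"
      by (simp add: field_simps del: of_nat_Suc)
  qed
  show "\<forall>\<^sub>F n in sequentially. real_of_int \<lceil>real (Suc n) * x\<rceil> / real (Suc n) \<le> x + inverse (real (Suc n))"
  proof (intro always_eventually allI)
    fix n :: nat
    have "real_of_int \<lceil>real (Suc n) * x\<rceil> \<le> real (Suc n) * x + 1" by linarith
    then show "real_of_int \<lceil>real (Suc n) * x\<rceil> / real (Suc n) \<le> x + inverse (real (Suc n))"
      by (simp add: field_simps del: of_nat_Suc)
  qed
  show "(\<lambda>n. x + inverse (real (Suc n))) \<longlonglongrightarrow> x"
    using tendsto_add[OF tendsto_const LIMSEQ_inverse_real_of_nat, of x] by simp
qed simp

lemma W_joint: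
  fixes W :: "real \<Rightarrow> 'a \<Rightarrow> real"
  assumes Wm: "\<And>t. W t \<in> borel_measurable M"
    and cont: "\<And>\<omega>. \<omega> \<in> space M \<Longrightarrow> continuous_on {0..} (\<lambda>t. W t \<omega>)"
  shows "(\<lambda>p. W (max 0 (fst p)) (snd p)) \<in> borel_measurable ((lborel::real measure) \<Otimes>\<^sub>M M)"
proof (rule borel_measurable_LIMSEQ_metric)
  fix n :: nat
  have 1: "(\<lambda>p. W (real_of_int i / real (Suc n)) (snd p)) \<in> borel_measurable ((lborel::real measure) \<Otimes>\<^sub>M M)" for i :: int
    by (rule measurable_compose[OF measurable_snd Wm])
  have 2: "(\<lambda>p. \<lceil>real (Suc n) * max 0 (fst p)\<rceil>) \<in> measurable ((lborel::real measure) \<Otimes>\<^sub>M M) (count_space UNIV)"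
    by measurable
  show "(\<lambda>p. W (real_of_int \<lceil>real (Suc n) * max 0 (fst p)\<rceil> / real (Suc n)) (snd p)) \<in> borel_measurable ((lborel::real measure) \<Otimes>\<^sub>M M)"
    by (rule measurable_compose_countable[OF 1 2])
next
  fix p assume "p \<in> space ((lborel::real measure) \<Otimes>\<^sub>M M)"
  then have "snd p \<in> space M" by (auto simp: space_pair_measure)
  note c = cont[OF this]
  show "(\<lambda>n. W (real_of_int \<lceil>real (Suc n) * max 0 (fst p)\<rceil> / real (Suc n)) (snd p)) \<longlonglongrightarrow> W (max 0 (fst p)) (snd p)"
  proof (rule continuous_on_tendsto_compose[OF c ceil_approx_lim])
    show "max 0 (fst p) \<in> {0..}" by simp
    show "\<forall>\<^sub>F n in sequentially. real_of_int \<lceil>real (Suc n) * max 0 (fst p)\<rceil> / real (Suc n) \<in> {0..}"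
    proof (intro always_eventually allI)
      fix n :: nat
      have "0 \<le> real (Suc n) * max 0 (fst p)" by simp
      then have "0 \<le> real_of_int \<lceil>real (Suc n) * max 0 (fst p)\<rceil>" by linarith
      then show "real_of_int \<lceil>real (Suc n) * max 0 (fst p)\<rceil> / real (Suc n) \<in> {0..}" by simp
    qed
  qed
qed


definition Ph :: "real \<Rightarrow> real \<Rightarrow> (real \<Rightarrow> 'a \<Rightarrow> real) \<Rightarrow> real \<Rightarrow> 'a \<Rightarrow> real" where
  "Ph m sg W s \<omega> = exp ((m - sg\<^sup>2 / 2) * s - sg * W s \<omega>)"

definition Wp :: "(real \<Rightarrow> 'a \<Rightarrow> real) \<Rightarrow> real \<Rightarrow> 'a \<Rightarrow> real" where
  "Wp W s \<omega> = W (max 0 s) \<omega>"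

lemma Ph_pos: "Ph m sg W s \<omega> > 0" by (simp add: Ph_def)

lemma Wp_eq: "s \<ge> 0 \<Longrightarrow> Wp W s \<omega> = W s \<omega>" by (simp add: Wp_def)
lemma Ph_Wp: "s \<ge> 0 \<Longrightarrow> Ph m sg (Wp W) s \<omega> = Ph m sg W s \<omega>" by (simp add: Ph_def Wp_def)

context
  fixes M :: "'a measure" and W :: "real \<Rightarrow> 'a \<Rightarrow> real"
  assumes BM: "standard_BM M W"
begin

lemma PM: "prob_space M" using BM by (simp add: standard_BM_def)
lemma Wm: "W t \<in> borel_measurable M" using BM by (simp add: standard_BM_def)
lemma Wcont: "\<omega> \<in> space M \<Longrightarrow> continuous_on {0..} (\<lambda>t. W t \<omega>)" using BM by (simp add: standard_BM_def)
lemma W0: "\<omega> \<in> space M \<Longrightarrow> W 0 \<omega> = 0" using BM by (simp add: standard_BM_def)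
lemma Wincr: "0 \<le> s \<Longrightarrow> s < t \<Longrightarrow> distributed M lborel (\<lambda>\<omega>. W t \<omega> - W s \<omega>)
          (\<lambda>x. ennreal (normal_density 0 (sqrt (t - s)) x))" using BM by (simp add: standard_BM_def)

lemma Wp_joint: "(\<lambda>p. Wp W (fst p) (snd p)) \<in> borel_measurable ((lborel::real measure) \<Otimes>\<^sub>M M)"
  unfolding Wp_def by (rule W_joint[OF Wm Wcont])

lemma Wp_meas:
  assumes f: "f \<in> borel_measurable N" and g: "g \<in> measurable N M"
  shows "(\<lambda>x. Wp W (f x) (g x)) \<in> borel_measurable N"
proof -
  have "(\<lambda>x. (f x, g x)) \<in> measurable N ((lborel::real measure) \<Otimes>\<^sub>M M)"
    using f g by (auto intro!: measurable_Pair simp: measurable_lborel2)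
  from measurable_compose[OF this Wp_joint] show ?thesis by simp
qed

lemma E_ratio:
  assumes "0 \<le> u" "u \<le> s"
  shows "(\<integral>\<^sup>+\<omega>. ennreal (Ph m sg W s \<omega> / Ph m sg W u \<omega>) \<partial>M) = ennreal (exp (m * (s - u)))"
proof -
  interpret prob_space M by (rule PM)
  note Wm[measurable]
  have eq: "Ph m sg W s \<omega> / Ph m sg W u \<omega> = exp ((m - sg\<^sup>2 / 2) * (s - u)) * exp ((- sg) * (W s \<omega> - W u \<omega>))" for \<omega>
    unfolding Ph_def exp_diff[symmetric] exp_add[symmetric] by (rule arg_cong[where f=exp]) (simp add: field_simps)
  show ?thesis
  proof (cases "u = s")
    case True
    then show ?thesis by (simp add: Ph_def emeasure_space_1)
  next
    case False
    then have us: "u < s" using assms by simp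
    have "(\<integral>\<^sup>+\<omega>. ennreal (Ph m sg W s \<omega> / Ph m sg W u \<omega>) \<partial>M)
        = ennreal (exp ((m - sg\<^sup>2 / 2) * (s - u))) * (\<integral>\<^sup>+\<omega>. ennreal (exp ((- sg) * (W s \<omega> - W u \<omega>))) \<partial>M)"
      unfolding eq by (subst nn_integral_cmult[symmetric]) (auto simp: ennreal_mult)
    also have "(\<integral>\<^sup>+\<omega>. ennreal (exp ((- sg) * (W s \<omega> - W u \<omega>))) \<partial>M) = ennreal (exp ((- sg)\<^sup>2 * (sqrt (s - u))\<^sup>2 / 2))"
      by (rule lognormal_mean[OF Wincr[OF assms(1) us]]) (use us in simp)
    also have "ennreal (exp ((m - sg\<^sup>2 / 2) * (s - u))) * ennreal (exp ((- sg)\<^sup>2 * (sqrt (s - u))\<^sup>2 / 2)) = ennreal (exp (m * (s - u)))"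
      using us by (simp add: ennreal_mult[symmetric] exp_add[symmetric] algebra_simps)
    finally show ?thesis .
  qed
qed

lemma E_Ph:
  assumes "0 \<le> s"
  shows "(\<integral>\<^sup>+\<omega>. ennreal (Ph m sg W s \<omega>) \<partial>M) = ennreal (exp (m * s))"
proof -
  have "(\<integral>\<^sup>+\<omega>. ennreal (Ph m sg W s \<omega>) \<partial>M) = (\<integral>\<^sup>+\<omega>. ennreal (Ph m sg W s \<omega> / Ph m sg W 0 \<omega>) \<partial>M)"
    by (intro nn_integral_cong) (simp add: Ph_def W0)
  also have "\<dots> = ennreal (exp (m * s))" using E_ratio[of 0 s m sg] assms by simp
  finally show ?thesis .
qed

end


lemma abs_div_mult_pos: "(y::real) > 0 \<Longrightarrow> (c + \<bar>w / y\<bar>) * y = c * y + \<bar>w\<bar>"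
  by (simp add: abs_div algebra_simps)

lemma qf_bounds: assumes "r > 0" "T > 0" "0 \<le> t" "t \<le> T" shows "0 \<le> qf r T t" "qf r T t \<le> 1"
proof -
  have a: "exp (- r * (T - t)) \<le> 1" using assms by simp
  have b: "1 - r * (T - t) \<le> exp (- r * (T - t))" using exp_ge_add_one_self[of "- r * (T - t)"] by simp
  have c: "r * (T - t) \<le> r * T" using assms by (intro mult_left_mono) auto
  show "0 \<le> qf r T t" unfolding qf_def using a assms by (intro divide_nonneg_pos) auto
  have d: "1 - exp (- r * (T - t)) \<le> r * T" using b c by linarith
  show "qf r T t \<le> 1" unfolding qf_def using d assms by (subst divide_le_eq_1_pos) auto
qed

context
  fixes nu :: "real measure" and r T :: real
  assumes nuP: "prob_space nu" and nuS[measurable_cong]: "sets nu = sets borel"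
    and nu0: "emeasure nu {..0} = 0" and nuI: "integrable nu (\<lambda>y. y)"
    and rpos: "r > 0" and Tpos: "T > 0"
begin

lemma AE_pos: "AE y in nu. y > 0"
proof (rule AE_I')
  show "{..0} \<in> null_sets nu" using nu0 nuS by (auto simp: null_sets_def)
qed auto

lemma xi_pos: "xi nu > 0"
proof -
  interpret prob_space nu by (rule nuP)
  have nn: "AE y in nu. 0 \<le> y" using AE_pos by eventually_elim auto
  have "xi nu \<ge> 0" unfolding xi_def using nn by (rule integral_nonneg_AE)
  moreover have "xi nu \<noteq> 0"
  proof
    assume "xi nu = 0"
    then have "AE y in nu. y = 0" using integral_nonneg_eq_0_iff_AE[OF nuI nn] by (simp add: xi_def)
    with AE_pos have "AE y in nu. False" by eventually_elim auto
    then show False by simp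
  qed
  ultimately show ?thesis by simp
qed

lemma Pop_mono:
  assumes "\<And>z. f z t \<le> g z t"
  shows "Pop nu r T f x t \<le> Pop nu r T g x t"
proof -
  have pw: "ennreal (f (x / y + qf r T t * (y - 1) / y) t * y) \<le> ennreal (g (x / y + qf r T t * (y - 1) / y) t * y)"
    if "0 < y" for y using that by (intro ennreal_leI mult_right_mono assms) auto
  show ?thesis unfolding Pop_def using AE_pos
    by (intro nn_integral_mono_AE) (auto elim!: eventually_mono intro: pw)
qed

lemma Pop_shift:
  assumes "0 \<le> t" "t \<le> T" "0 \<le> c"
  shows "Pop nu r T (\<lambda>z t. c + \<bar>z\<bar>) (x + d) t \<le> Pop nu r T (\<lambda>z t. c + \<bar>z\<bar>) x t + ennreal \<bar>d\<bar>"
proof -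
  interpret prob_space nu by (rule nuP)
  let ?q = "qf r T t"
  have "Pop nu r T (\<lambda>z t. c + \<bar>z\<bar>) (x + d) t \<le>
      (\<integral>\<^sup>+y. ennreal ((c + \<bar>x / y + ?q * (y - 1) / y\<bar>) * y) + ennreal \<bar>d\<bar> \<partial>nu)"
  proof -
    have pw: "ennreal ((c + \<bar>(x + d) / y + ?q * (y - 1) / y\<bar>) * y) \<le> ennreal ((c + \<bar>x / y + ?q * (y - 1) / y\<bar>) * y) + ennreal \<bar>d\<bar>"
      if elim: "0 < y" for y
    proof -
    have e1: "(x + d) / y + ?q * (y - 1) / y = (x + d + ?q * (y - 1)) / y" by (simp add: add_divide_distrib)
    have e2: "x / y + ?q * (y - 1) / y = (x + ?q * (y - 1)) / y" by (simp add: add_divide_distrib)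
    have "(c + \<bar>(x + d) / y + ?q * (y - 1) / y\<bar>) * y \<le> (c + \<bar>x / y + ?q * (y - 1) / y\<bar>) * y + \<bar>d\<bar>"
      unfolding e1 e2 abs_div_mult_pos[OF elim] by linarith
    then have "ennreal ((c + \<bar>(x + d) / y + ?q * (y - 1) / y\<bar>) * y) \<le> ennreal ((c + \<bar>x / y + ?q * (y - 1) / y\<bar>) * y + \<bar>d\<bar>)"
      by (rule ennreal_leI)
    also have "\<dots> = ennreal ((c + \<bar>x / y + ?q * (y - 1) / y\<bar>) * y) + ennreal \<bar>d\<bar>"
      using elim assms(3) by (intro ennreal_plus) auto
    finally show ?thesis .
    qed
    show ?thesis unfolding Pop_def using AE_pos
      by (intro nn_integral_mono_AE) (auto elim!: eventually_mono intro: pw)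
  qed
  also have "\<dots> \<le> Pop nu r T (\<lambda>z t. c + \<bar>z\<bar>) x t + (\<integral>\<^sup>+y. ennreal \<bar>d\<bar> \<partial>nu)"
    unfolding Pop_def by (rule nn_integral_add_le) simp
  also have "(\<integral>\<^sup>+y. ennreal \<bar>d\<bar> \<partial>nu) = ennreal \<bar>d\<bar>" by (simp add: emeasure_space_1)
  finally show ?thesis .
qed

lemma Pop_bound:
  assumes "0 \<le> t" "t \<le> T" "0 \<le> c"
  shows "Pop nu r T (\<lambda>z t. c + \<bar>z\<bar>) x t \<le> ennreal ((c + 1) * xi nu + 1) + ennreal \<bar>x\<bar>"
proof -
  interpret prob_space nu by (rule nuP)
  let ?q = "qf r T t"
  have q: "0 \<le> ?q" "?q \<le> 1" using qf_bounds[OF rpos Tpos assms(1,2)] by auto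
  have "Pop nu r T (\<lambda>z t. c + \<bar>z\<bar>) x t \<le> (\<integral>\<^sup>+y. ennreal ((c + 1) * y + (\<bar>x\<bar> + 1)) \<partial>nu)"
  proof -
    have pw: "ennreal ((c + \<bar>x / y + ?q * (y - 1) / y\<bar>) * y) \<le> ennreal ((c + 1) * y + (\<bar>x\<bar> + 1))"
      if elim: "0 < y" for y
    proof -
    have e2: "x / y + ?q * (y - 1) / y = (x + ?q * (y - 1)) / y" by (simp add: add_divide_distrib)
    have "\<bar>?q * (y - 1)\<bar> \<le> \<bar>y - 1\<bar>" using q by (simp add: abs_mult mult_left_le_one_le)
    then have "(c + \<bar>x / y + ?q * (y - 1) / y\<bar>) * y \<le> (c + 1) * y + (\<bar>x\<bar> + 1)"
      unfolding e2 abs_div_mult_pos[OF elim] using elim by (auto simp: algebra_simps)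
    then show ?thesis by (intro ennreal_leI)
    qed
    show ?thesis unfolding Pop_def using AE_pos
      by (intro nn_integral_mono_AE) (auto elim!: eventually_mono intro: pw)
  qed
  also have "\<dots> = ennreal (\<integral>y. (c + 1) * y + (\<bar>x\<bar> + 1) \<partial>nu)"
    using AE_pos nuI assms(3)
    by (intro nn_integral_eq_integral) (auto elim!: eventually_mono intro!: add_nonneg_nonneg)
  also have "(\<integral>y. (c + 1) * y + (\<bar>x\<bar> + 1) \<partial>nu) = (c + 1) * xi nu + (\<bar>x\<bar> + 1)"
    using nuI by (simp add: xi_def prob_space)
  also have "ennreal ((c + 1) * xi nu + (\<bar>x\<bar> + 1)) = ennreal ((c + 1) * xi nu + 1) + ennreal \<bar>x\<bar>"
    using xi_pos assms(3) by (subst ennreal_plus[symmetric]) (auto simp: algebra_simps)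
  finally show ?thesis .
qed

end

lemma pred_in_Icc[measurable (raw)]:
  fixes f g h :: "'b \<Rightarrow> real"
  assumes [measurable]: "f \<in> borel_measurable N" "g \<in> borel_measurable N" "h \<in> borel_measurable N"
  shows "Measurable.pred N (\<lambda>x. f x \<in> {g x..h x})"
  unfolding atLeastAtMost_iff by measurable

lemma Zshift: "Zsol r T m sg W t z s \<omega> = Zsol r T m sg W t 0 s \<omega> + Ph m sg W s \<omega> * z"
  by (simp add: Zsol_def Let_def Ph_def algebra_simps)

lemma max_shift_le:
  fixes zeta a b K :: real
  assumes "zeta \<in> {-1, 1}"
  shows "max 0 (zeta * (a + b - K)) \<le> max 0 (zeta * (a - K)) + \<bar>b\<bar>"
  using assms by (auto simp: max_def abs_if)

lemma max_abs_le:
  fixes zeta a K :: real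
  assumes "zeta \<in> {-1, 1}" "0 \<le> K"
  shows "max 0 (zeta * (a - K)) \<le> \<bar>a\<bar> + K"
  using assms by (auto simp: max_def abs_if)

lemma exp_nn_integral:
  assumes "0 \<le> \<tau>" "0 \<le> lam"
  shows "(\<integral>\<^sup>+s. ennreal (lam * exp (- lam * s)) * indicator {0..\<tau>} s \<partial>lborel) = ennreal (1 - exp (- lam * \<tau>))"
proof -
  have "((\<lambda>s. lam * exp (- lam * s)) has_integral ((- exp (- lam * \<tau>)) - (- exp (- lam * 0)))) {0..\<tau>}"
  proof (rule fundamental_theorem_of_calculus[OF assms(1)])
    fix x :: real
    show "((\<lambda>s. - exp (- lam * s)) has_vector_derivative lam * exp (- lam * x)) (at x within {0..\<tau>})"
      unfolding has_real_derivative_iff_has_vector_derivative[symmetric]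
      by (auto intro!: derivative_eq_intros)
  qed
  then have "((\<lambda>s. lam * exp (- lam * s)) has_integral (1 - exp (- lam * \<tau>))) {0..\<tau>}" by simp
  from nn_integral_has_integral_lebesgue[OF _ this] assms(2)
  have "(\<integral>\<^sup>+s. ennreal (indicator {0..\<tau>} s * (lam * exp (- lam * s))) \<partial>lborel) = ennreal (1 - exp (- lam * \<tau>))"
    by simp
  moreover have "(\<integral>\<^sup>+s. ennreal (lam * exp (- lam * s)) * indicator {0..\<tau>} s \<partial>lborel)
     = (\<integral>\<^sup>+s. ennreal (indicator {0..\<tau>} s * (lam * exp (- lam * s))) \<partial>lborel)"
    by (intro nn_integral_cong) (auto split: split_indicator)
  ultimately show ?thesis by simp
qed

context
  fixes M :: "'a measure" and W :: "real \<Rightarrow> 'a \<Rightarrow> real" and nu :: "real measure"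
    and r sg lam T K1 zeta :: real
  assumes rpos: "r > 0" and sgpos: "sg > 0" and lampos: "lam > 0" and Tpos: "T > 0" and K1: "K1 \<ge> 0"
    and zeta: "zeta \<in> {-1, 1}"
    and BM: "standard_BM M W"
    and nuP: "prob_space nu" and nuS[measurable_cong]: "sets nu = sets borel" and nu0: "emeasure nu {..0} = 0"
    and nuI: "integrable nu (\<lambda>y. y)"
begin

definition Iv :: "(real \<Rightarrow> real \<Rightarrow> real) \<Rightarrow> real \<Rightarrow> real \<Rightarrow> ennreal" where
  "Iv f z t = (\<integral>\<^sup>+ \<omega>.
        ennreal (exp (- lam * xi nu * (T - t))
                 * max 0 (zeta * (Zsol r T (mu lam nu) sg W t z (T - t) \<omega> - K1)))
        + (\<integral>\<^sup>+ s\<in>{0..T - t}. ennreal (exp (- lam * xi nu * s) * lam)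
              * Pop nu r T f (Zsol r T (mu lam nu) sg W t z s \<omega>) (t + s) \<partial>lborel)
      \<partial>M)"

lemma Jop_Iv: "Jop M W nu r sg lam T K1 zeta f z t = enn2real (Iv f z t)"
  by (simp add: Jop_def Iv_def)

lemma Iv_mono:
  assumes fg: "\<forall>z. \<forall>t'\<in>{0..T}. f z t' \<le> g z t'" and t: "0 \<le> t"
  shows "Iv f z t \<le> Iv g z t"
  unfolding Iv_def
proof (intro nn_integral_mono add_mono order_refl)
  fix \<omega> s
  show "ennreal (exp (- lam * xi nu * s) * lam) * Pop nu r T f (Zsol r T (mu lam nu) sg W t z s \<omega>) (t + s) * indicator {0..T - t} s
     \<le> ennreal (exp (- lam * xi nu * s) * lam) * Pop nu r T g (Zsol r T (mu lam nu) sg W t z s \<omega>) (t + s) * indicator {0..T - t} s"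
  proof (cases "s \<in> {0..T - t}")
    case True
    then have "t + s \<in> {0..T}" using t by auto
    then have "Pop nu r T f x (t + s) \<le> Pop nu r T g x (t + s)" for x
      using fg by (intro Pop_mono[OF nuP nuS nu0 nuI rpos Tpos]) auto
    then show ?thesis by (intro mult_right_mono mult_left_mono) auto
  qed simp
qed

lemmas Wp_meas'[measurable (raw)] = Wp_meas[OF BM]

lemma PhWp_meas[measurable (raw)]:
  assumes [measurable]: "f \<in> borel_measurable N" "g \<in> measurable N M"
  shows "(\<lambda>x. Ph m s (Wp W) (f x) (g x)) \<in> borel_measurable N"
  unfolding Ph_def by measurable

lemma Iv_L_shift:
  assumes t: "0 \<le> t" "t \<le> T" and c: "0 \<le> c"
  shows "Iv (\<lambda>z t. c + \<bar>z\<bar>) z t \<le> Iv (\<lambda>z t. c + \<bar>z\<bar>) 0 t + ennreal \<bar>z\<bar>"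
proof -
  interpret prob_space M using PM[OF BM] .
  interpret P2: pair_sigma_finite lborel M
    unfolding pair_sigma_finite_def using prob_space_imp_sigma_finite[OF PM[OF BM]] lborel.sigma_finite_measure_axioms by simp
  let ?L = "\<lambda>z t. c + \<bar>z\<bar>"
  let ?m = "mu lam nu"
  define \<tau> where "\<tau> = T - t"
  have \<tau>: "0 \<le> \<tau>" using t by (simp add: \<tau>_def)
  define e1 where "e1 = exp (- lam * xi nu * \<tau>)"
  define es where "es s = exp (- lam * xi nu * s) * lam" for s
  define P where "P s \<omega> = Ph ?m sg (Wp W) s \<omega>" for s \<omega>
  define Z where "Z s \<omega> = Zsol r T ?m sg W t 0 s \<omega>" for s \<omega>
  define H where "H \<omega> = ennreal (e1 * \<bar>z\<bar>) * ennreal (P \<tau> \<omega>)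
     + (\<integral>\<^sup>+s. ennreal (es s * \<bar>z\<bar>) * ennreal (P s \<omega>) * indicator {0..\<tau>} s \<partial>lborel)" for \<omega>
  have Zs: "Zsol r T ?m sg W t z s \<omega> = Z s \<omega> + P s \<omega> * z" if "0 \<le> s" for s \<omega>
    using that by (simp add: Z_def P_def Ph_Wp Zshift[of r T ?m sg W t z s \<omega>])
  have e1: "0 \<le> e1" by (simp add: e1_def)
  have es: "0 \<le> es s" for s using lampos by (simp add: es_def)
  have Pp: "0 < P s \<omega>" for s \<omega> by (simp add: P_def Ph_pos)
  have pw: "ennreal (e1 * max 0 (zeta * (Zsol r T ?m sg W t z \<tau> \<omega> - K1)))
        + (\<integral>\<^sup>+ s\<in>{0..\<tau>}. ennreal (es s) * Pop nu r T ?L (Zsol r T ?m sg W t z s \<omega>) (t + s) \<partial>lborel)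
      \<le> (ennreal (e1 * max 0 (zeta * (Z \<tau> \<omega> - K1)))
        + (\<integral>\<^sup>+ s\<in>{0..\<tau>}. ennreal (es s) * Pop nu r T ?L (Z s \<omega>) (t + s) \<partial>lborel)) + H \<omega>"
    if \<omega>: "\<omega> \<in> space M" for \<omega>
  proof -
    have a: "ennreal (e1 * max 0 (zeta * (Zsol r T ?m sg W t z \<tau> \<omega> - K1)))
       \<le> ennreal (e1 * max 0 (zeta * (Z \<tau> \<omega> - K1))) + ennreal (e1 * \<bar>z\<bar>) * ennreal (P \<tau> \<omega>)"
    proof -
      have "e1 * max 0 (zeta * (Z \<tau> \<omega> + P \<tau> \<omega> * z - K1)) \<le> e1 * (max 0 (zeta * (Z \<tau> \<omega> - K1)) + \<bar>P \<tau> \<omega> * z\<bar>)"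
        by (intro mult_left_mono max_shift_le zeta e1)
      also have "\<dots> = e1 * max 0 (zeta * (Z \<tau> \<omega> - K1)) + (e1 * \<bar>z\<bar>) * P \<tau> \<omega>"
        using Pp[of \<tau> \<omega>] by (simp add: abs_mult algebra_simps)
      finally have "ennreal (e1 * max 0 (zeta * (Zsol r T ?m sg W t z \<tau> \<omega> - K1)))
         \<le> ennreal (e1 * max 0 (zeta * (Z \<tau> \<omega> - K1)) + (e1 * \<bar>z\<bar>) * P \<tau> \<omega>)"
        using Zs[OF \<tau>] by (intro ennreal_leI) simp
      also have "\<dots> = ennreal (e1 * max 0 (zeta * (Z \<tau> \<omega> - K1))) + ennreal (e1 * \<bar>z\<bar>) * ennreal (P \<tau> \<omega>)"
        using e1 Pp[of \<tau> \<omega>] by (simp add: ennreal_mult)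
      finally show ?thesis .
    qed
    have b: "(\<integral>\<^sup>+ s\<in>{0..\<tau>}. ennreal (es s) * Pop nu r T ?L (Zsol r T ?m sg W t z s \<omega>) (t + s) \<partial>lborel)
      \<le> (\<integral>\<^sup>+ s\<in>{0..\<tau>}. ennreal (es s) * Pop nu r T ?L (Z s \<omega>) (t + s) \<partial>lborel)
        + (\<integral>\<^sup>+s. ennreal (es s * \<bar>z\<bar>) * ennreal (P s \<omega>) * indicator {0..\<tau>} s \<partial>lborel)"
    proof -
      have "(\<integral>\<^sup>+ s\<in>{0..\<tau>}. ennreal (es s) * Pop nu r T ?L (Zsol r T ?m sg W t z s \<omega>) (t + s) \<partial>lborel)
        \<le> (\<integral>\<^sup>+ s. ennreal (es s) * Pop nu r T ?L (Z s \<omega>) (t + s) * indicator {0..\<tau>} s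
              + ennreal (es s * \<bar>z\<bar>) * ennreal (P s \<omega>) * indicator {0..\<tau>} s \<partial>lborel)"
      proof (intro nn_integral_mono)
        fix s
        show "ennreal (es s) * Pop nu r T ?L (Zsol r T ?m sg W t z s \<omega>) (t + s) * indicator {0..\<tau>} s
          \<le> ennreal (es s) * Pop nu r T ?L (Z s \<omega>) (t + s) * indicator {0..\<tau>} s
              + ennreal (es s * \<bar>z\<bar>) * ennreal (P s \<omega>) * indicator {0..\<tau>} s"
        proof (cases "s \<in> {0..\<tau>}")
          case True
          then have s0: "0 \<le> s" and ts: "0 \<le> t + s" "t + s \<le> T" using t by (auto simp: \<tau>_def)
          have "Pop nu r T ?L (Zsol r T ?m sg W t z s \<omega>) (t + s) \<le> Pop nu r T ?L (Z s \<omega>) (t + s) + ennreal \<bar>P s \<omega> * z\<bar>"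
            unfolding Zs[OF s0] by (rule Pop_shift[OF nuP nuS nu0 nuI rpos Tpos ts c])
          also have "ennreal \<bar>P s \<omega> * z\<bar> = ennreal \<bar>z\<bar> * ennreal (P s \<omega>)"
            using Pp[of s \<omega>] by (simp add: abs_mult ennreal_mult mult.commute)
          finally have "ennreal (es s) * Pop nu r T ?L (Zsol r T ?m sg W t z s \<omega>) (t + s)
             \<le> ennreal (es s) * (Pop nu r T ?L (Z s \<omega>) (t + s) + ennreal \<bar>z\<bar> * ennreal (P s \<omega>))"
            by (rule mult_left_mono) simp
          also have "\<dots> = ennreal (es s) * Pop nu r T ?L (Z s \<omega>) (t + s) + ennreal (es s * \<bar>z\<bar>) * ennreal (P s \<omega>)"
            using es[of s] by (simp add: distrib_left ennreal_mult mult.assoc)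
          finally show ?thesis using True by simp
        qed simp
      qed
      also have "\<dots> \<le> (\<integral>\<^sup>+ s\<in>{0..\<tau>}. ennreal (es s) * Pop nu r T ?L (Z s \<omega>) (t + s) \<partial>lborel)
        + (\<integral>\<^sup>+s. ennreal (es s * \<bar>z\<bar>) * ennreal (P s \<omega>) * indicator {0..\<tau>} s \<partial>lborel)"
      proof (rule nn_integral_add_le)
        have [measurable]: "(\<lambda>s. \<omega>) \<in> measurable lborel M" using \<omega> by simp
        show "(\<lambda>s. ennreal (es s * \<bar>z\<bar>) * ennreal (P s \<omega>) * indicator {0..\<tau>} s) \<in> borel_measurable lborel"
          unfolding es_def P_def by measurable
      qed
      finally show ?thesis .
    qed
    from add_mono[OF a b] show ?thesis by (simp add: H_def add_ac)
  qed
  have Hm: "H \<in> borel_measurable M"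
    unfolding H_def es_def P_def by measurable
  define F where "F s \<omega> = ennreal (es s * \<bar>z\<bar>) * ennreal (P s \<omega>) * indicator {0..\<tau>} s" for s \<omega>
  have Fm[measurable]: "(\<lambda>p. F (fst p) (snd p)) \<in> borel_measurable (lborel \<Otimes>\<^sub>M M)"
    unfolding F_def es_def P_def by measurable
  have EF: "(\<integral>\<^sup>+\<omega>. F s \<omega> \<partial>M) = ennreal (es s * \<bar>z\<bar>) * ennreal (exp (?m * s)) * indicator {0..\<tau>} s" for s
  proof (cases "s \<in> {0..\<tau>}")
    case True
    then have s0: "0 \<le> s" by simp
    have "(\<integral>\<^sup>+\<omega>. F s \<omega> \<partial>M) = (\<integral>\<^sup>+\<omega>. ennreal (es s * \<bar>z\<bar>) * ennreal (Ph ?m sg W s \<omega>) \<partial>M)"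
      using True s0 by (intro nn_integral_cong) (simp add: F_def P_def Ph_Wp)
    also have "\<dots> = ennreal (es s * \<bar>z\<bar>) * ennreal (exp (?m * s))"
      using Wm[OF BM] by (subst nn_integral_cmult) (auto simp: Ph_def E_Ph[OF BM s0, unfolded Ph_def])
    finally show ?thesis using True by simp
  qed (simp add: F_def)
  have E1: "(\<integral>\<^sup>+\<omega>. ennreal (e1 * \<bar>z\<bar>) * ennreal (P \<tau> \<omega>) \<partial>M) = ennreal (e1 * \<bar>z\<bar>) * ennreal (exp (?m * \<tau>))"
  proof -
    have "(\<integral>\<^sup>+\<omega>. ennreal (e1 * \<bar>z\<bar>) * ennreal (P \<tau> \<omega>) \<partial>M) = (\<integral>\<^sup>+\<omega>. ennreal (e1 * \<bar>z\<bar>) * ennreal (Ph ?m sg W \<tau> \<omega>) \<partial>M)"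
      using \<tau> by (intro nn_integral_cong) (simp add: P_def Ph_Wp)
    also have "\<dots> = ennreal (e1 * \<bar>z\<bar>) * ennreal (exp (?m * \<tau>))"
      using Wm[OF BM] by (subst nn_integral_cmult) (auto simp: Ph_def E_Ph[OF BM \<tau>, unfolded Ph_def])
    finally show ?thesis .
  qed
  have "(\<integral>\<^sup>+\<omega>. H \<omega> \<partial>M) = (\<integral>\<^sup>+\<omega>. ennreal (e1 * \<bar>z\<bar>) * ennreal (P \<tau> \<omega>) \<partial>M) + (\<integral>\<^sup>+\<omega>. (\<integral>\<^sup>+s. F s \<omega> \<partial>lborel) \<partial>M)"
    unfolding H_def F_def[symmetric] by (rule nn_integral_add) (unfold F_def P_def es_def, measurable)
  also have "(\<integral>\<^sup>+\<omega>. (\<integral>\<^sup>+s. F s \<omega> \<partial>lborel) \<partial>M) = (\<integral>\<^sup>+s. (\<integral>\<^sup>+\<omega>. F s \<omega> \<partial>M) \<partial>lborel)"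
    using P2.Fubini[OF Fm] by simp
  also have "\<dots> = (\<integral>\<^sup>+s. ennreal \<bar>z\<bar> * (ennreal (lam * exp (- lam * s)) * indicator {0..\<tau>} s) \<partial>lborel)"
  proof (intro nn_integral_cong)
    fix s
    have "es s * \<bar>z\<bar> * exp (?m * s) = \<bar>z\<bar> * (lam * exp (- lam * s))"
      unfolding es_def mu_def by (simp add: mult_exp_exp algebra_simps)
    then show "(\<integral>\<^sup>+\<omega>. F s \<omega> \<partial>M) = ennreal \<bar>z\<bar> * (ennreal (lam * exp (- lam * s)) * indicator {0..\<tau>} s)"
    proof -
      have "ennreal (es s * \<bar>z\<bar>) * ennreal (exp (?m * s)) = ennreal (es s * \<bar>z\<bar> * exp (?m * s))"
        using es[of s] by (simp add: ennreal_mult)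
      also have "\<dots> = ennreal \<bar>z\<bar> * ennreal (lam * exp (- lam * s))"
        unfolding \<open>es s * \<bar>z\<bar> * exp (?m * s) = \<bar>z\<bar> * (lam * exp (- lam * s))\<close> using lampos
        by (simp add: ennreal_mult)
      finally show ?thesis unfolding EF by (simp add: mult.assoc)
    qed
  qed
  also have "\<dots> = ennreal \<bar>z\<bar> * ennreal (1 - exp (- lam * \<tau>))"
    using exp_nn_integral[OF \<tau> less_imp_le[OF lampos]] by (subst nn_integral_cmult) auto
  finally have EHeq: "(\<integral>\<^sup>+\<omega>. H \<omega> \<partial>M) = ennreal (e1 * \<bar>z\<bar>) * ennreal (exp (?m * \<tau>)) + ennreal \<bar>z\<bar> * ennreal (1 - exp (- lam * \<tau>))"
    unfolding E1 .
  have ee: "e1 * \<bar>z\<bar> * exp (?m * \<tau>) = \<bar>z\<bar> * exp (- lam * \<tau>)"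
    unfolding e1_def mu_def by (simp add: mult_exp_exp algebra_simps)
  have ge: "0 \<le> 1 - exp (- lam * \<tau>)" using \<tau> lampos by simp
  have EH: "(\<integral>\<^sup>+\<omega>. H \<omega> \<partial>M) = ennreal \<bar>z\<bar>"
  proof -
    have a1: "ennreal (e1 * \<bar>z\<bar>) * ennreal (exp (?m * \<tau>)) = ennreal (e1 * \<bar>z\<bar> * exp (?m * \<tau>))"
      using e1 by (simp add: ennreal_mult)
    have a2: "ennreal \<bar>z\<bar> * ennreal (1 - exp (- lam * \<tau>)) = ennreal (\<bar>z\<bar> * (1 - exp (- lam * \<tau>)))"
      using ge by (simp add: ennreal_mult)
    have a3: "ennreal (\<bar>z\<bar> * exp (- lam * \<tau>)) + ennreal (\<bar>z\<bar> * (1 - exp (- lam * \<tau>)))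
        = ennreal (\<bar>z\<bar> * exp (- lam * \<tau>) + \<bar>z\<bar> * (1 - exp (- lam * \<tau>)))"
      using ge by (intro ennreal_plus[symmetric]) auto
    show ?thesis unfolding EHeq a1 a2 ee a3 by (simp add: algebra_simps)
  qed
  have "Iv ?L z t \<le> (\<integral>\<^sup>+\<omega>. (ennreal (e1 * max 0 (zeta * (Z \<tau> \<omega> - K1)))
        + (\<integral>\<^sup>+ s\<in>{0..\<tau>}. ennreal (es s) * Pop nu r T ?L (Z s \<omega>) (t + s) \<partial>lborel)) + H \<omega> \<partial>M)"
    unfolding Iv_def \<tau>_def[symmetric] e1_def[symmetric] es_def[symmetric]
    by (intro nn_integral_mono pw)
  also have "\<dots> \<le> Iv ?L 0 t + (\<integral>\<^sup>+\<omega>. H \<omega> \<partial>M)"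
    unfolding Iv_def \<tau>_def[symmetric] e1_def[symmetric] es_def[symmetric] Z_def
    by (rule nn_integral_add_le[OF Hm])
  finally show ?thesis unfolding EH .
qed

lemma Zsol_alt: "Zsol r T m sg W t z s \<omega> = qf r T (t + s) - Ph m sg W s \<omega> *
   (qf r T t - z + integral {0..s} (\<lambda>u. (- exp (- r * (T - (t + u))) / T) / Ph m sg W u \<omega>))"
  by (simp add: Zsol_def Ph_def Let_def)

lemma Zbound:
  assumes t: "0 \<le> t" "t \<le> T" and \<omega>: "\<omega> \<in> space M" and s: "0 \<le> s" "s \<le> T - t"
  shows "ennreal (\<bar>Zsol r T (mu lam nu) sg W t 0 s \<omega>\<bar> + K1) \<le>
    ennreal (1 + K1 + Ph (mu lam nu) sg (Wp W) s \<omega>)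
    + (\<integral>\<^sup>+u. ennreal (Ph (mu lam nu) sg (Wp W) s \<omega> / Ph (mu lam nu) sg (Wp W) u \<omega> / T) * indicator {0..s} u \<partial>lborel)"
proof -
  let ?m = "mu lam nu"
  let ?P = "\<lambda>u. Ph ?m sg W u \<omega>"
  define F where "F u = (- exp (- r * (T - (t + u))) / T) / ?P u" for u
  define G where "G u = (1 / T) / ?P u" for u
  have cW: "continuous_on {0..s} (\<lambda>u. W u \<omega>)"
    using Wcont[OF BM \<omega>] by (rule continuous_on_subset) auto
  have cP: "continuous_on {0..s} ?P" unfolding Ph_def by (intro continuous_intros cW)
  have Pnz: "?P u \<noteq> 0" for u using Ph_pos[of ?m sg W u \<omega>] by simp
  have iF: "F integrable_on {0..s}" unfolding F_def
    by (intro integrable_continuous_interval continuous_intros cP) (use Pnz Tpos in auto)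
  have iG: "G integrable_on {0..s}" unfolding G_def
    by (intro integrable_continuous_interval continuous_intros cP) (use Pnz Tpos in auto)
  have FG: "norm (F u) \<le> G u" if "u \<in> {0..s}" for u
  proof -
    have "exp (- r * (T - (t + u))) \<le> 1" using that s rpos by simp
    then show ?thesis unfolding F_def G_def using Ph_pos[of ?m sg W u \<omega>] Tpos
      by (simp add: abs_div divide_right_mono)
  qed
  have A: "\<bar>integral {0..s} F\<bar> \<le> integral {0..s} G"
    using integral_norm_bound_integral[OF iF iG FG] by simp
  have Gn: "0 \<le> G u" for u unfolding G_def using Ph_pos[of ?m sg W u \<omega>] Tpos by simp
  have G0: "0 \<le> integral {0..s} G"
    by (rule integral_nonneg[OF iG]) (use Gn in auto)
  have q1: "0 \<le> qf r T (t + s)" "qf r T (t + s) \<le> 1" using qf_bounds[OF rpos Tpos, of "t + s"] t s by auto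
  have q2: "0 \<le> qf r T t" "qf r T t \<le> 1" using qf_bounds[OF rpos Tpos, of t] t by auto
  have Ps: "0 < ?P s" by (simp add: Ph_pos)
  define I where "I = integral {0..s} F"
  have Zeq: "Zsol r T ?m sg W t 0 s \<omega> = qf r T (t + s) - ?P s * (qf r T t + I)"
    unfolding Zsol_alt I_def by (simp add: F_def[abs_def])
  have "\<bar>Zsol r T ?m sg W t 0 s \<omega>\<bar> \<le> \<bar>qf r T (t + s)\<bar> + \<bar>?P s * (qf r T t + I)\<bar>"
    unfolding Zeq by (rule abs_triangle_ineq4)
  also have "\<bar>?P s * (qf r T t + I)\<bar> = ?P s * \<bar>qf r T t + I\<bar>" using Ps by (simp add: abs_mult)
  also have "?P s * \<bar>qf r T t + I\<bar> \<le> ?P s * (1 + integral {0..s} G)"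
  proof (rule mult_left_mono)
    have "\<bar>qf r T t + I\<bar> \<le> \<bar>qf r T t\<bar> + \<bar>I\<bar>" by (rule abs_triangle_ineq)
    then show "\<bar>qf r T t + I\<bar> \<le> 1 + integral {0..s} G" using q2 A unfolding I_def by linarith
  qed (use Ps in simp)
  also have "?P s * (1 + integral {0..s} G) = ?P s + ?P s * integral {0..s} G" by (simp add: algebra_simps)
  finally have "\<bar>Zsol r T ?m sg W t 0 s \<omega>\<bar> \<le> \<bar>qf r T (t + s)\<bar> + (?P s + ?P s * integral {0..s} G)" by simp
  then have "\<bar>Zsol r T ?m sg W t 0 s \<omega>\<bar> \<le> 1 + ?P s + ?P s * integral {0..s} G" using q1 by linarith
  then have Zle: "\<bar>Zsol r T ?m sg W t 0 s \<omega>\<bar> + K1 \<le> (1 + K1 + ?P s) + integral {0..s} (\<lambda>u. ?P s * G u)"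
    by simp
  have PGn: "0 \<le> ?P s * G u" for u using Gn[of u] Ps by simp
  have int: "((\<lambda>u. ?P s * G u) has_integral integral {0..s} (\<lambda>u. ?P s * G u)) {0..s}"
    using integrable_on_cmult_left[OF iG, of "?P s"] by (intro integrable_integral) simp
  have "ennreal (integral {0..s} (\<lambda>u. ?P s * G u)) = (\<integral>\<^sup>+u. ennreal (indicator {0..s} u * (?P s * G u)) \<partial>lborel)"
    by (rule nn_integral_has_integral_lebesgue[OF _ int, symmetric])
       (use PGn in auto)
  also have "\<dots> = (\<integral>\<^sup>+u. ennreal (Ph ?m sg (Wp W) s \<omega> / Ph ?m sg (Wp W) u \<omega> / T) * indicator {0..s} u \<partial>lborel)"
    using s by (intro nn_integral_cong) (auto simp: G_def Ph_Wp mult.commute split: split_indicator)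
  finally have Ieq: "ennreal (integral {0..s} (\<lambda>u. ?P s * G u)) = \<dots>" .
  have "ennreal (\<bar>Zsol r T ?m sg W t 0 s \<omega>\<bar> + K1) \<le> ennreal ((1 + K1 + ?P s) + integral {0..s} (\<lambda>u. ?P s * G u))"
    by (rule ennreal_leI[OF Zle])
  also have "\<dots> = ennreal (1 + K1 + ?P s) + ennreal (integral {0..s} (\<lambda>u. ?P s * G u))"
    using K1 Ps G0 by (intro ennreal_plus) auto
  finally show ?thesis unfolding Ieq using s by (simp add: Ph_Wp)
qed

lemma ER:
  assumes s: "0 \<le> s" "s \<le> T"
  shows "(\<integral>\<^sup>+\<omega>. ennreal (1 + K1 + Ph (mu lam nu) sg (Wp W) s \<omega>)
    + (\<integral>\<^sup>+u. ennreal (Ph (mu lam nu) sg (Wp W) s \<omega> / Ph (mu lam nu) sg (Wp W) u \<omega> / T) * indicator {0..s} u \<partial>lborel) \<partial>M)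
    \<le> ennreal (1 + K1 + 2 * exp (\<bar>mu lam nu\<bar> * T))"
proof -
  interpret prob_space M using PM[OF BM] .
  interpret P2: pair_sigma_finite lborel M
    unfolding pair_sigma_finite_def using prob_space_imp_sigma_finite[OF PM[OF BM]] lborel.sigma_finite_measure_axioms by simp
  let ?m = "mu lam nu"
  define Em where "Em = exp (\<bar>?m\<bar> * T)"
  have Emle: "exp (?m * a) \<le> Em" if "0 \<le> a" "a \<le> T" for a
  proof -
    have "?m * a \<le> \<bar>?m\<bar> * a" using that by (intro mult_right_mono) auto
    also have "\<dots> \<le> \<bar>?m\<bar> * T" using that by (intro mult_left_mono) auto
    finally show ?thesis unfolding Em_def by simp
  qed
  define P where "P s \<omega> = Ph ?m sg (Wp W) s \<omega>" for s \<omega>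
  define B where "B u \<omega> = ennreal (P s \<omega> / P u \<omega> / T) * indicator {0..s} u" for u \<omega>
  have Bm[measurable]: "(\<lambda>p. B (fst p) (snd p)) \<in> borel_measurable (lborel \<Otimes>\<^sub>M M)"
    unfolding B_def P_def by measurable
  have Pp: "0 < P u \<omega>" for u \<omega> by (simp add: P_def Ph_pos)
  have "(\<integral>\<^sup>+\<omega>. ennreal (1 + K1 + P s \<omega>) + (\<integral>\<^sup>+u. B u \<omega> \<partial>lborel) \<partial>M)
      = (\<integral>\<^sup>+\<omega>. ennreal (1 + K1) + ennreal (P s \<omega>) \<partial>M) + (\<integral>\<^sup>+\<omega>. (\<integral>\<^sup>+u. B u \<omega> \<partial>lborel) \<partial>M)"
  proof -
    have "(\<integral>\<^sup>+\<omega>. ennreal (1 + K1 + P s \<omega>) + (\<integral>\<^sup>+u. B u \<omega> \<partial>lborel) \<partial>M)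
      = (\<integral>\<^sup>+\<omega>. (ennreal (1 + K1) + ennreal (P s \<omega>)) + (\<integral>\<^sup>+u. B u \<omega> \<partial>lborel) \<partial>M)"
      using K1 Pp by (intro nn_integral_cong) (simp add: ennreal_plus less_imp_le)
    also have "\<dots> = (\<integral>\<^sup>+\<omega>. ennreal (1 + K1) + ennreal (P s \<omega>) \<partial>M) + (\<integral>\<^sup>+\<omega>. (\<integral>\<^sup>+u. B u \<omega> \<partial>lborel) \<partial>M)"
      by (rule nn_integral_add) (unfold B_def P_def, measurable)
    finally show ?thesis .
  qed
  also have "(\<integral>\<^sup>+\<omega>. ennreal (1 + K1) + ennreal (P s \<omega>) \<partial>M) = ennreal (1 + K1) + ennreal (exp (?m * s))"
  proof -
    have "(\<integral>\<^sup>+\<omega>. ennreal (1 + K1) + ennreal (P s \<omega>) \<partial>M) = (\<integral>\<^sup>+\<omega>. ennreal (1 + K1) \<partial>M) + (\<integral>\<^sup>+\<omega>. ennreal (P s \<omega>) \<partial>M)"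
      by (rule nn_integral_add) (unfold P_def, measurable)
    also have "(\<integral>\<^sup>+\<omega>. ennreal (P s \<omega>) \<partial>M) = (\<integral>\<^sup>+\<omega>. ennreal (Ph ?m sg W s \<omega>) \<partial>M)"
      using s by (intro nn_integral_cong) (simp add: P_def Ph_Wp)
    also have "\<dots> = ennreal (exp (?m * s))" by (rule E_Ph[OF BM s(1)])
    finally show ?thesis by (simp add: emeasure_space_1)
  qed
  also have "(\<integral>\<^sup>+\<omega>. (\<integral>\<^sup>+u. B u \<omega> \<partial>lborel) \<partial>M) = (\<integral>\<^sup>+u. (\<integral>\<^sup>+\<omega>. B u \<omega> \<partial>M) \<partial>lborel)"
    using P2.Fubini[OF Bm] by simp
  also have "\<dots> \<le> (\<integral>\<^sup>+u. ennreal (Em / T) * indicator {0..s} u \<partial>lborel)"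
  proof (intro nn_integral_mono)
    fix u
    show "(\<integral>\<^sup>+\<omega>. B u \<omega> \<partial>M) \<le> ennreal (Em / T) * indicator {0..s} u"
    proof (cases "u \<in> {0..s}")
      case True
      then have u: "0 \<le> u" "u \<le> s" by auto
      have "(\<integral>\<^sup>+\<omega>. B u \<omega> \<partial>M) = (\<integral>\<^sup>+\<omega>. ennreal (1 / T) * ennreal (Ph ?m sg W s \<omega> / Ph ?m sg W u \<omega>) \<partial>M)"
        using True u s Tpos Ph_pos[of ?m sg W s] Ph_pos[of ?m sg W u]
        by (intro nn_integral_cong) (simp add: B_def P_def Ph_Wp ennreal_mult[symmetric] less_imp_le)
      also have "\<dots> = ennreal (1 / T) * ennreal (exp (?m * (s - u)))"
        using Wm[OF BM] by (subst nn_integral_cmult) (auto simp: Ph_def E_ratio[OF BM u, unfolded Ph_def])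
      also have "\<dots> \<le> ennreal (1 / T) * ennreal Em"
        using Emle[of "s - u"] u s by (intro mult_left_mono ennreal_leI) auto
      also have "\<dots> = ennreal (Em / T) * indicator {0..s} u"
        using True Tpos by (simp add: ennreal_mult[symmetric] Em_def)
      finally show ?thesis .
    qed (simp add: B_def)
  qed
  also have "\<dots> = ennreal (Em / T) * ennreal s"
    using s by (simp add: nn_integral_cmult_indicator)
  also have "\<dots> \<le> ennreal Em"
  proof -
    have "Em / T * s \<le> Em" using s Tpos by (simp add: Em_def field_simps)
    then show ?thesis using s Tpos by (simp add: ennreal_mult[symmetric] Em_def ennreal_leI)
  qed
  finally have "(\<integral>\<^sup>+\<omega>. ennreal (1 + K1 + P s \<omega>) + (\<integral>\<^sup>+u. B u \<omega> \<partial>lborel) \<partial>M)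
      \<le> ennreal (1 + K1) + ennreal (exp (?m * s)) + ennreal Em" by (simp add: add_mono)
  also have "\<dots> \<le> ennreal (1 + K1) + ennreal Em + ennreal Em"
    using Emle[OF s] by (intro add_mono ennreal_leI) auto
  also have "\<dots> = ennreal (1 + K1 + 2 * Em)"
    using K1 by (simp add: Em_def ennreal_plus[symmetric] del: ennreal_plus)
  finally show ?thesis unfolding B_def P_def Em_def .
qed

lemma Iv_L_fin:
  assumes t: "0 \<le> t" "t \<le> T" and c: "0 \<le> c"
  shows "Iv (\<lambda>z t. c + \<bar>z\<bar>) 0 t < \<infinity>"
proof -
  interpret prob_space M using PM[OF BM] .
  interpret P2: pair_sigma_finite lborel M
    unfolding pair_sigma_finite_def using prob_space_imp_sigma_finite[OF PM[OF BM]] lborel.sigma_finite_measure_axioms by simp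
  let ?L = "\<lambda>z t. c + \<bar>z\<bar>"
  let ?m = "mu lam nu"
  define \<tau> where "\<tau> = T - t"
  have \<tau>: "0 \<le> \<tau>" "\<tau> \<le> T" using t by (auto simp: \<tau>_def)
  define e1 where "e1 = exp (- lam * xi nu * \<tau>)"
  define es where "es s = exp (- lam * xi nu * s) * lam" for s
  define P where "P s \<omega> = Ph ?m sg (Wp W) s \<omega>" for s \<omega>
  define Z where "Z s \<omega> = Zsol r T ?m sg W t 0 s \<omega>" for s \<omega>
  define C1 where "C1 = (c + 1) * xi nu + 1"
  define K2 where "K2 = 1 + K1 + 2 * exp (\<bar>?m\<bar> * T)"
  define R where "R s \<omega> = ennreal (1 + K1 + P s \<omega>) + (\<integral>\<^sup>+u. ennreal (P s \<omega> / P u \<omega> / T) * indicator {0..s} u \<partial>lborel)" for s \<omega>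
  define G where "G s \<omega> = ennreal lam * (ennreal C1 + R s \<omega>) * indicator {0..\<tau>} s" for s \<omega>
  have xi: "0 < xi nu" by (rule xi_pos[OF nuP nuS nu0 nuI rpos Tpos])
  have C1: "0 \<le> C1" using xi c by (simp add: C1_def)
  have Gm[measurable]: "(\<lambda>p. G (fst p) (snd p)) \<in> borel_measurable (lborel \<Otimes>\<^sub>M M)"
    unfolding G_def R_def P_def by measurable
  have Rm: "(\<lambda>\<omega>. R \<tau> \<omega>) \<in> borel_measurable M"
    unfolding R_def P_def by measurable
  have ERb: "(\<integral>\<^sup>+\<omega>. R s \<omega> \<partial>M) \<le> ennreal K2" if "0 \<le> s" "s \<le> T" for s
    using ER[OF that] unfolding R_def P_def K2_def .
  have Zb: "ennreal (\<bar>Z s \<omega>\<bar> + K1) \<le> R s \<omega>" if "\<omega> \<in> space M" "0 \<le> s" "s \<le> \<tau>" for s \<omega>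
    using Zbound[OF t that[unfolded \<tau>_def]] unfolding Z_def R_def P_def .
  have e1: "0 \<le> e1" "e1 \<le> 1" using xi lampos \<tau> by (auto simp: e1_def)
  have es: "ennreal (es s) \<le> ennreal lam" if "0 \<le> s" for s
    using xi lampos that by (intro ennreal_leI) (simp add: es_def mult_left_le_one_le)
  have pw: "ennreal (e1 * max 0 (zeta * (Z \<tau> \<omega> - K1)))
        + (\<integral>\<^sup>+ s\<in>{0..\<tau>}. ennreal (es s) * Pop nu r T ?L (Z s \<omega>) (t + s) \<partial>lborel)
      \<le> R \<tau> \<omega> + (\<integral>\<^sup>+s. G s \<omega> \<partial>lborel)" if \<omega>: "\<omega> \<in> space M" for \<omega>
  proof (rule add_mono)
    have "e1 * max 0 (zeta * (Z \<tau> \<omega> - K1)) \<le> 1 * max 0 (zeta * (Z \<tau> \<omega> - K1))"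
      using e1 by (intro mult_right_mono) auto
    also have "\<dots> \<le> \<bar>Z \<tau> \<omega>\<bar> + K1" using max_abs_le[OF zeta K1] by simp
    finally have "ennreal (e1 * max 0 (zeta * (Z \<tau> \<omega> - K1))) \<le> ennreal (\<bar>Z \<tau> \<omega>\<bar> + K1)"
      by (rule ennreal_leI)
    also have "\<dots> \<le> R \<tau> \<omega>" using Zb[OF \<omega> \<tau>(1) order_refl] .
    finally show "ennreal (e1 * max 0 (zeta * (Z \<tau> \<omega> - K1))) \<le> R \<tau> \<omega>" .
  next
    show "(\<integral>\<^sup>+ s\<in>{0..\<tau>}. ennreal (es s) * Pop nu r T ?L (Z s \<omega>) (t + s) \<partial>lborel) \<le> (\<integral>\<^sup>+s. G s \<omega> \<partial>lborel)"
    proof (intro nn_integral_mono)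
      fix s
      show "ennreal (es s) * Pop nu r T ?L (Z s \<omega>) (t + s) * indicator {0..\<tau>} s \<le> G s \<omega>"
      proof (cases "s \<in> {0..\<tau>}")
        case True
        then have s: "0 \<le> s" "s \<le> \<tau>" by auto
        have ts: "0 \<le> t + s" "t + s \<le> T" using s t by (auto simp: \<tau>_def)
        have "Pop nu r T ?L (Z s \<omega>) (t + s) \<le> ennreal C1 + ennreal \<bar>Z s \<omega>\<bar>"
          unfolding C1_def by (rule Pop_bound[OF nuP nuS nu0 nuI rpos Tpos ts c])
        also have "ennreal \<bar>Z s \<omega>\<bar> \<le> ennreal (\<bar>Z s \<omega>\<bar> + K1)" using K1 by (intro ennreal_leI) simp
        also have "\<dots> \<le> R s \<omega>" using Zb[OF \<omega> s] .
        finally have "ennreal (es s) * Pop nu r T ?L (Z s \<omega>) (t + s) \<le> ennreal lam * (ennreal C1 + R s \<omega>)"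
          using es[OF s(1)] by (intro mult_mono) (auto simp: add_left_mono)
        then show ?thesis using True by (simp add: G_def)
      qed (simp add: G_def)
    qed
  qed
  have "Iv ?L 0 t \<le> (\<integral>\<^sup>+\<omega>. R \<tau> \<omega> + (\<integral>\<^sup>+s. G s \<omega> \<partial>lborel) \<partial>M)"
    unfolding Iv_def \<tau>_def[symmetric] e1_def[symmetric] es_def[symmetric] Z_def[symmetric]
    by (intro nn_integral_mono pw)
  also have "\<dots> = (\<integral>\<^sup>+\<omega>. R \<tau> \<omega> \<partial>M) + (\<integral>\<^sup>+\<omega>. (\<integral>\<^sup>+s. G s \<omega> \<partial>lborel) \<partial>M)"
    by (rule nn_integral_add[OF Rm]) (unfold G_def R_def P_def, measurable)
  also have "(\<integral>\<^sup>+\<omega>. (\<integral>\<^sup>+s. G s \<omega> \<partial>lborel) \<partial>M) = (\<integral>\<^sup>+s. (\<integral>\<^sup>+\<omega>. G s \<omega> \<partial>M) \<partial>lborel)"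
    using P2.Fubini[OF Gm] by simp
  also have "\<dots> \<le> (\<integral>\<^sup>+s. ennreal (lam * (C1 + K2)) * indicator {0..\<tau>} s \<partial>lborel)"
  proof (intro nn_integral_mono)
    fix s
    show "(\<integral>\<^sup>+\<omega>. G s \<omega> \<partial>M) \<le> ennreal (lam * (C1 + K2)) * indicator {0..\<tau>} s"
    proof (cases "s \<in> {0..\<tau>}")
      case True
      then have s: "0 \<le> s" "s \<le> T" using \<tau> by auto
      have Rsm: "(\<lambda>\<omega>. R s \<omega>) \<in> borel_measurable M" unfolding R_def P_def by measurable
      have "(\<integral>\<^sup>+\<omega>. G s \<omega> \<partial>M) = ennreal lam * (\<integral>\<^sup>+\<omega>. ennreal C1 + R s \<omega> \<partial>M)"
        using True Rsm by (simp add: G_def nn_integral_cmult)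
      also have "(\<integral>\<^sup>+\<omega>. ennreal C1 + R s \<omega> \<partial>M) = ennreal C1 + (\<integral>\<^sup>+\<omega>. R s \<omega> \<partial>M)"
        using Rsm by (simp add: nn_integral_add emeasure_space_1)
      also have "\<dots> \<le> ennreal C1 + ennreal K2" using ERb[OF s] by (rule add_left_mono)
      also have "ennreal lam * (ennreal C1 + ennreal K2) = ennreal (lam * (C1 + K2))"
        using C1 lampos K1 by (simp add: K2_def ennreal_mult ennreal_plus[symmetric] del: ennreal_plus)
      finally show ?thesis using True by (simp add: mult_left_mono)
    qed (simp add: G_def)
  qed
  also have "\<dots> = ennreal (lam * (C1 + K2)) * ennreal \<tau>"
    using \<tau> by (simp add: nn_integral_cmult_indicator)
  finally have "Iv ?L 0 t \<le> ennreal K2 + ennreal (lam * (C1 + K2)) * ennreal \<tau>"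
    using ERb[OF \<tau>] by (meson add_mono order_refl order_trans)
  also have "\<dots> < \<infinity>" by (simp add: ennreal_mult_less_top)
  finally show ?thesis .
qed

lemma step:
  assumes c: "0 \<le> c"
    and hypL: "\<forall>t\<in>{0..T}. Jop M W nu r sg lam T K1 zeta (\<lambda>z t. c + \<bar>z\<bar>) 0 t \<le> c"
    and f: "\<forall>z. \<forall>t\<in>{0..T}. f z t \<le> c + \<bar>z\<bar>" and t: "t \<in> {0..T}"
  shows "Jop M W nu r sg lam T K1 zeta f z t \<le> c + \<bar>z\<bar>"
proof -
  have t': "0 \<le> t" "t \<le> T" using t by auto
  let ?L = "\<lambda>z t. c + \<bar>z\<bar>"
  have fin: "Iv ?L 0 t < \<infinity>" by (rule Iv_L_fin[OF t' c])
  have "Iv ?L 0 t = ennreal (enn2real (Iv ?L 0 t))" using fin by simp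
  also have "enn2real (Iv ?L 0 t) \<le> c" using hypL t by (simp add: Jop_Iv)
  finally have L0: "Iv ?L 0 t \<le> ennreal c" by (simp add: ennreal_leI)
  have "Iv f z t \<le> Iv ?L z t" by (rule Iv_mono) (use f t' in auto)
  also have "\<dots> \<le> Iv ?L 0 t + ennreal \<bar>z\<bar>" by (rule Iv_L_shift[OF t' c])
  also have "\<dots> \<le> ennreal c + ennreal \<bar>z\<bar>" using L0 by (rule add_right_mono)
  also have "\<dots> = ennreal (c + \<bar>z\<bar>)" using c by simp
  finally show ?thesis unfolding Jop_Iv by (rule enn2real_leI[rotated]) (use c in simp)
qed


end


theorem corollary4p9:
  fixes M :: "'a measure" and W :: "real \<Rightarrow> 'a \<Rightarrow> real" and nu :: "real measure"
    and r sg lam T K1 zeta U B :: real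
  assumes "r > 0" and "sg > 0" and "lam > 0" and "T > 0" and "K1 \<ge> 0"
    and "zeta \<in> {-1, 1}"
    and "standard_BM M W"
    and "prob_space nu" and "sets nu = sets borel" and "emeasure nu {..0} = 0"
    and "integrable nu (\<lambda>y. y)"
    and "U > 0" and "B > 0"
    and hyp: "\<And>f. (\<lambda>(z, t). f z t) \<in> borel_measurable borel
       \<Longrightarrow> (\<forall>z. \<forall>t\<in>{0..T}. 0 \<le> f z t)
       \<Longrightarrow> (\<forall>z z'. \<forall>t\<in>{0..T}. \<bar>f z t - f z' t\<bar> \<le> \<bar>z - z'\<bar>)
       \<Longrightarrow> bdd_above ((\<lambda>t. f 0 t) ` {0..T})
       \<Longrightarrow> \<forall>t\<in>{0..T}. Jop M W nu r sg lam T K1 zeta f 0 t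
             \<le> U + alpha lam nu T * ((SUP t\<in>{0..T}. f 0 t) + B / xi nu)"
  shows "\<forall>n z. \<forall>t\<in>{0..T}.
           vseq M W nu r sg lam T K1 zeta n z t
             \<le> U / (1 - alpha lam nu T)
               + alpha lam nu T / (1 - alpha lam nu T) * (B / xi nu) + K1 + \<bar>z\<bar>"
proof -
  define a where "a = alpha lam nu T"
  define c where "c = U / (1 - a) + a / (1 - a) * (B / xi nu) + K1"
  have xi: "0 < xi nu" by (rule xi_pos[OF assms(8-11,1,4)])
  have e: "0 < exp (- lam * xi nu * T)" "exp (- lam * xi nu * T) < 1"
    using xi assms(3,4) by auto
  have a: "0 < a" "a < 1" using e by (auto simp: a_def alpha_def)
  have c0: "K1 \<le> c" unfolding c_def using a assms(12,13) xi
    by (simp add: divide_nonneg_pos)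
  have c: "0 \<le> c" using c0 assms(5) by simp
  let ?L = "\<lambda>z t. c + \<bar>z\<bar>"
  have hL: "\<forall>t\<in>{0..T}. Jop M W nu r sg lam T K1 zeta ?L 0 t \<le> U + a * ((SUP t\<in>{0..T}. ?L 0 t) + B / xi nu)"
    unfolding a_def
  proof (rule hyp)
    show "(\<lambda>(z, t). c + \<bar>z\<bar>) \<in> borel_measurable borel"
      unfolding case_prod_beta by (intro borel_measurable_continuous_onI continuous_intros)
    show "\<forall>z. \<forall>t\<in>{0..T}. 0 \<le> c + \<bar>z\<bar>" using c by simp
    show "\<forall>z z'. \<forall>t\<in>{0..T}. \<bar>(c + \<bar>z\<bar>) - (c + \<bar>z'\<bar>)\<bar> \<le> \<bar>z - z'\<bar>"
      by (simp add: abs_triangle_ineq3)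
    show "bdd_above ((\<lambda>t. c + \<bar>0::real\<bar>) ` {0..T})" by (rule bdd_aboveI[where M=c]) auto
  qed
  have sup: "(SUP t\<in>{0..T}. ?L 0 t) = c" using assms(4) by simp
  have key: "U + a * (c + B / xi nu) \<le> c"
  proof -
    have na: "1 - a \<noteq> 0" using a by simp
    have "(1 - a) * c = (1 - a) * (U / (1 - a)) + (1 - a) * (a / (1 - a) * (B / xi nu)) + (1 - a) * K1"
      unfolding c_def by (simp only: distrib_left)
    also have "\<dots> = U + a * (B / xi nu) + (1 - a) * K1" using na by simp
    finally have "(1 - a) * c = U + a * (B / xi nu) + (1 - a) * K1" .
    then have e2: "c - a * c = U + a * (B / xi nu) + K1 - a * K1" by (simp add: algebra_simps)
    have nn: "0 \<le> (1 - a) * K1" using a assms(5) by simp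
    then have nn2: "0 \<le> K1 - a * K1" by (simp add: algebra_simps)
    show ?thesis unfolding distrib_left using e2 nn2 by linarith
  qed
  have hypL: "\<forall>t\<in>{0..T}. Jop M W nu r sg lam T K1 zeta ?L 0 t \<le> c"
    using hL key unfolding sup by (meson order_trans)
  have "\<forall>z. \<forall>t\<in>{0..T}. vseq M W nu r sg lam T K1 zeta n z t \<le> c + \<bar>z\<bar>" for n
  proof (induction n)
    case 0
    show ?case
    proof (intro allI ballI)
      fix z t
      have "max 0 (zeta * (z - K1)) \<le> \<bar>z\<bar> + K1" by (rule max_abs_le[OF assms(6,5)])
      then show "vseq M W nu r sg lam T K1 zeta 0 z t \<le> c + \<bar>z\<bar>"
        using c0 by (simp add: vseq_def)
    qed
  next
    case (Suc n)
    show ?case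
    proof (intro allI ballI)
      fix z t assume t: "t \<in> {0..T}"
      have "vseq M W nu r sg lam T K1 zeta (Suc n) z t = Jop M W nu r sg lam T K1 zeta (vseq M W nu r sg lam T K1 zeta n) z t"
        by (simp add: vseq_def)
      also have "\<dots> \<le> c + \<bar>z\<bar>" by (rule step[OF assms(1-11) c hypL Suc.IH t])
      finally show "vseq M W nu r sg lam T K1 zeta (Suc n) z t \<le> c + \<bar>z\<bar>" .
    qed
  qed
  then show ?thesis unfolding c_def a_def by simp
qed

end
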